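(* Let $n \ge 1$ and $k \in \{1, \ldots, n\}$, with red tanks $R_1, \ldots, R_n$ each initially containing $1$ unit and blue tanks $B_1, \ldots, B_n$ initially empty. After running the moving window strategy (for $i = 1, \ldots, n-k+1$ in order, for $j = i, \ldots, i+k-1$ in order, equilibrate $R_i$ and $B_j$), the total amount of water in the red tanks is at most \[ \frac{n-k+1}{k+1} + (k-1). \] In particular, for $k = \lfloor \sqrt{n+2} \rfloor$ this total is strictly less than $2\sqrt{n}$.
   Context: Equilibrating two tanks $a \neq b$ with water levels $x_a, x_b$ replaces both levels by $\frac{x_a+x_b}{2}$ and leaves all other tanks unchanged. *)

theory Defs
  imports Complex_Main
begin

datatype tank = Red nat | Blue nat

type_synonym state = "tank \<Rightarrow> real"

definition equilibrate :: "state \<Rightarrow> tank \<Rightarrow> tank \<Rightarrow> state" where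
  "equilibrate s a b = s(a := (s a + s b) / 2, b := (s a + s b) / 2)"

definition init_state :: "nat \<Rightarrow> state" where
  "init_state n = (\<lambda>t. case t of Red i \<Rightarrow> (if 1 \<le> i \<and> i \<le> n then 1 else 0) | Blue j \<Rightarrow> 0)"

definition moving_window_ops :: "nat \<Rightarrow> nat \<Rightarrow> (tank \<times> tank) list" where
  "moving_window_ops n k =
     concat (map (\<lambda>i. map (\<lambda>j. (Red i, Blue j)) [i..<i+k]) [1..<n-k+2])"

definition run_ops :: "state \<Rightarrow> (tank \<times> tank) list \<Rightarrow> state" where
  "run_ops s ops = foldl (\<lambda>st p. equilibrate st (fst p) (snd p)) s ops"

definition moving_window :: "nat \<Rightarrow> nat \<Rightarrow> state" where
  "moving_window n k = run_ops (init_state n) (moving_window_ops n k)"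

definition red_total :: "nat \<Rightarrow> state \<Rightarrow> real" where
  "red_total n s = (\<Sum>i = 1..n. s (Red i))"

end

theory Submission
  imports Defs
begin

lemma run_ops_append: "run_ops s (xs @ ys) = run_ops (run_ops s xs) ys"
  by (simp add: run_ops_def)

lemma run_ops_snoc: "run_ops s (xs @ [p]) = equilibrate (run_ops s xs) (fst p) (snd p)"
  by (simp add: run_ops_def)

lemma inner:
  fixes k m i :: nat and s :: state
  assumes "m \<le> k" "s (Red i) \<le> 1"
    "\<forall>l. 1 \<le> l \<and> l \<le> m \<longrightarrow> s (Blue (i+l-1)) \<le> (real k - real l) / (real k + 1)"
  shows "run_ops s (map (\<lambda>j. (Red i, Blue j)) [i..<i+m]) (Red i) \<le> 1 - real m / (real k + 1)
    \<and> (\<forall>j. i \<le> j \<and> j < i+m \<longrightarrow> run_ops s (map (\<lambda>j. (Red i, Blue j)) [i..<i+m]) (Blue j)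
             \<le> 1 - (real j - real i + 1) / (real k + 1))
    \<and> (\<forall>t. t \<noteq> Red i \<and> (\<forall>j. i \<le> j \<and> j < i+m \<longrightarrow> t \<noteq> Blue j)
             \<longrightarrow> run_ops s (map (\<lambda>j. (Red i, Blue j)) [i..<i+m]) t = s t)"
  using assms
proof (induction m)
  case 0
  then show ?case by (simp add: run_ops_def)
next
  case (Suc m)
  define s1 where "s1 = run_ops s (map (\<lambda>j. (Red i, Blue j)) [i..<i+m])"
  have IH: "s1 (Red i) \<le> 1 - real m / (real k + 1)"
    "\<forall>j. i \<le> j \<and> j < i+m \<longrightarrow> s1 (Blue j) \<le> 1 - (real j - real i + 1) / (real k + 1)"
    "\<forall>t. t \<noteq> Red i \<and> (\<forall>j. i \<le> j \<and> j < i+m \<longrightarrow> t \<noteq> Blue j) \<longrightarrow> s1 t = s t"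
    using Suc by (auto simp: s1_def)
  have b: "s1 (Blue (i+m)) = s (Blue (i+m))" using IH(3) by auto
  have b2: "s (Blue (i+m)) \<le> (real k - real (Suc m)) / (real k + 1)"
    using Suc.prems(3) by (metis add_Suc_right diff_Suc_1 le_add1 le_refl plus_1_eq_Suc add.commute)
  have eq: "run_ops s (map (\<lambda>j. (Red i, Blue j)) [i..<i+Suc m])
      = equilibrate s1 (Red i) (Blue (i+m))"
    by (simp add: s1_def run_ops_snoc)
  define v where "v = (s1 (Red i) + s1 (Blue (i+m))) / 2"
  have kp: "real k + 1 > 0" by simp
  have "v \<le> ((1 - real m / (real k + 1)) + (real k - real (Suc m)) / (real k + 1)) / 2"
  proof -
    have "s1 (Red i) + s1 (Blue (i+m)) \<le> (1 - real m / (real k + 1)) + (real k - real (Suc m)) / (real k + 1)"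
      using IH(1) b b2 by linarith
    then show ?thesis unfolding v_def by (rule divide_right_mono) simp
  qed
  also have "\<dots> = 1 - real (Suc m) / (real k + 1)"
  proof -
    have g: "\<And>x a::real. x \<noteq> 0 \<Longrightarrow> (1 - a/x + (x - 1 - (a+1))/x)/2 = 1 - (a+1)/x"
      by (simp add: field_simps)
    show ?thesis using g[of "real k + 1" "real m"] by (simp add: algebra_simps)
  qed
  finally have v: "v \<le> 1 - real (Suc m) / (real k + 1)" .
  have v2: "v \<le> 1 - (real (i+m) - real i + 1) / (real k + 1)" using v by (simp add: add.commute)
  show ?case
    unfolding eq equilibrate_def v_def[symmetric]
    using v v2 IH(2) IH(3) by (auto simp: less_Suc_eq)
qed

lemma outer:
  fixes k n q :: nat
  assumes k1: "1 \<le> k"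
  defines "t \<equiv> run_ops (init_state n) (concat (map (\<lambda>i. map (\<lambda>j. (Red i, Blue j)) [i..<i+k]) [1..<q+1]))"
  shows "(\<forall>i. 1 \<le> i \<and> i \<le> q \<longrightarrow> t (Red i) \<le> 1 / (real k + 1))
    \<and> (\<forall>i. q < i \<longrightarrow> t (Red i) = init_state n (Red i))
    \<and> (\<forall>j. q < j \<longrightarrow> t (Blue j) \<le> max 0 ((real q + real k - real j) / (real k + 1)))"
  unfolding t_def
proof (induction q)
  case 0
  then show ?case by (simp add: run_ops_def init_state_def)
next
  case (Suc q)
  define s where "s = run_ops (init_state n) (concat (map (\<lambda>i. map (\<lambda>j. (Red i, Blue j)) [i..<i+k]) [1..<q+1]))"
  have IH: "\<forall>i. 1 \<le> i \<and> i \<le> q \<longrightarrow> s (Red i) \<le> 1 / (real k + 1)"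
    "\<forall>i. q < i \<longrightarrow> s (Red i) = init_state n (Red i)"
    "\<forall>j. q < j \<longrightarrow> s (Blue j) \<le> max 0 ((real q + real k - real j) / (real k + 1))"
    using Suc.IH by (simp_all add: s_def)
  have eq: "run_ops (init_state n) (concat (map (\<lambda>i. map (\<lambda>j. (Red i, Blue j)) [i..<i+k]) [1..<Suc q+1]))
     = run_ops s (map (\<lambda>j. (Red (Suc q), Blue j)) [Suc q..<Suc q+k])"
    by (simp add: s_def run_ops_append)
  have p1: "s (Red (Suc q)) \<le> 1" using IH(2) by (simp add: init_state_def)
  have p2: "\<forall>l. 1 \<le> l \<and> l \<le> k \<longrightarrow> s (Blue (Suc q+l-1)) \<le> (real k - real l) / (real k + 1)"
  proof (intro allI impI)
    fix l assume l: "1 \<le> l \<and> l \<le> k"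
    have "s (Blue (Suc q+l-1)) \<le> max 0 ((real q + real k - real (Suc q+l-1)) / (real k + 1))"
    proof -
      have "q < Suc q+l-1" using l by simp
      then show ?thesis using IH(3) by blast
    qed
    also have "real q + real k - real (Suc q+l-1) = real k - real l" using l by simp
    also have "max 0 ((real k - real l) / (real k + 1)) = (real k - real l) / (real k + 1)"
      using l by simp
    finally show "s (Blue (Suc q+l-1)) \<le> (real k - real l) / (real k + 1)" .
  qed
  note I = inner[OF le_refl p1 p2]
  define s' where "s' = run_ops s (map (\<lambda>j. (Red (Suc q), Blue j)) [Suc q..<Suc q+k])"
  have I1: "s' (Red (Suc q)) \<le> 1 / (real k + 1)"
  proof -
    have "s' (Red (Suc q)) \<le> 1 - real k / (real k + 1)" using I by (simp add: s'_def)
    also have "1 - real k / (real k + 1) = 1 / (real k + 1)" by (simp add: field_simps)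
    finally show ?thesis .
  qed
  have I2: "\<forall>j. Suc q \<le> j \<and> j < Suc q + k \<longrightarrow> s' (Blue j) \<le> max 0 ((real (Suc q) + real k - real j) / (real k + 1))"
  proof (intro allI impI)
    fix j assume j: "Suc q \<le> j \<and> j < Suc q + k"
    have "s' (Blue j) \<le> 1 - (real j - real (Suc q) + 1) / (real k + 1)" using I j by (simp add: s'_def)
    also have "1 - (real j - real (Suc q) + 1) / (real k + 1) = (real (Suc q) + real k - real j) / (real k + 1)"
      by (simp add: field_simps)
    finally show "s' (Blue j) \<le> max 0 ((real (Suc q) + real k - real j) / (real k + 1))" by linarith
  qed
  have I3: "\<forall>t. t \<noteq> Red (Suc q) \<and> (\<forall>j. Suc q \<le> j \<and> j < Suc q+k \<longrightarrow> t \<noteq> Blue j) \<longrightarrow> s' t = s t"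
    using I by (simp add: s'_def)
  have A: "\<forall>i. 1 \<le> i \<and> i \<le> Suc q \<longrightarrow> s' (Red i) \<le> 1 / (real k + 1)"
  proof (intro allI impI)
    fix i assume i: "1 \<le> i \<and> i \<le> Suc q"
    show "s' (Red i) \<le> 1 / (real k + 1)"
    proof (cases "i = Suc q")
      case True then show ?thesis using I1 by simp
    next
      case False
      have "s' (Red i) = s (Red i)" using I3 False by simp
      also have "\<dots> \<le> 1 / (real k + 1)" using IH(1) False i by simp
      finally show ?thesis .
    qed
  qed
  have B: "\<forall>i. Suc q < i \<longrightarrow> s' (Red i) = init_state n (Red i)"
  proof (intro allI impI)
    fix i assume i: "Suc q < i"
    have "s' (Red i) = s (Red i)" using I3 i by simp
    also have "\<dots> = init_state n (Red i)" using IH(2) i by simp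
    finally show "s' (Red i) = init_state n (Red i)" .
  qed
  have C: "\<forall>j. Suc q < j \<longrightarrow> s' (Blue j) \<le> max 0 ((real (Suc q) + real k - real j) / (real k + 1))"
  proof (intro allI impI)
    fix j assume j: "Suc q < j"
    show "s' (Blue j) \<le> max 0 ((real (Suc q) + real k - real j) / (real k + 1))"
    proof (cases "j < Suc q + k")
      case True then show ?thesis using I2 j by simp
    next
      case False
      then have "s' (Blue j) = s (Blue j)" using I3 by auto
      also have "\<dots> \<le> max 0 ((real q + real k - real j) / (real k + 1))" using IH(3) j by simp
      also have "\<dots> \<le> max 0 ((real (Suc q) + real k - real j) / (real k + 1))"
        by (intro max.mono divide_right_mono) auto
      finally show ?thesis .
    qed
  qed
  show ?case unfolding eq s'_def[symmetric] using A B C by blast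
qed


lemma part2:
  fixes n k :: nat
  assumes "1 \<le> n" "k = nat \<lfloor>sqrt (real n + 2)\<rfloor>"
  shows "(real n - real k + 1) / (real k + 1) + (real k - 1) < 2 * sqrt (real n)"
proof -
  define r where "r = sqrt (real n + 2)"
  define x where "x = real k + 1"
  have r0: "r \<ge> 0" unfolding r_def by simp
  have rr: "r * r = real n + 2" unfolding r_def by simp
  have f0: "\<lfloor>r\<rfloor> \<ge> 0" using r0 by simp
  have kr: "real k = of_int \<lfloor>r\<rfloor>" using assms(2) f0 unfolding r_def by simp
  have fc: "of_int \<lfloor>r\<rfloor> \<le> r" "r < of_int \<lfloor>r\<rfloor> + 1" by (rule of_int_floor_le, rule real_of_int_floor_add_one_gt)
  have x1: "r < x" using kr fc unfolding x_def by linarith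
  have x2: "x \<le> r + 1" using kr fc unfolding x_def by linarith
  have xp: "x > 0" unfolding x_def by simp
  have kx: "real k = x - 1" unfolding x_def by simp
  have "(real n - real k + 1) / (real k + 1) + (real k - 1) = (r*r - x) / x + x - 2"
    unfolding kx rr by simp
  also have "\<dots> = (r*r + x*x - 3*x) / x"
    using xp by (simp add: field_simps)
  finally have e: "(real n - real k + 1) / (real k + 1) + (real k - 1) = (r*r + x*x - 3*x) / x" .
  have q: "r*r + x*x = 2*(r*x) + x + (x-r)*(x-r-1) - r" by (simp add: algebra_simps)
  have "(x-r)*(x-r-1) \<le> 0" using x1 x2 by (intro mult_nonneg_nonpos) auto
  hence h0: "r*r + x*x - 3*x \<le> 2*(r*x) - 2*x" using q r0 by linarith
  have h1: "r*r + x*x - 3*x \<le> (2*r - 2) * x" using h0 by (simp add: algebra_simps)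
  have sn: "sqrt (real n) \<ge> 1" using assms(1) by simp
  have sq: "sqrt (real n) * sqrt (real n) = real n" by simp
  have "(sqrt (real n) + 1)^2 = real n + 2 * sqrt (real n) + 1"
    unfolding power2_eq_square using sq by (simp add: algebra_simps)
  also have "\<dots> > real n + 2" using sn by linarith
  finally have "sqrt (real n + 2) < sqrt ((sqrt (real n) + 1)^2)" by (rule real_sqrt_less_mono)
  also have "sqrt ((sqrt (real n) + 1)^2) = sqrt (real n) + 1" using sn by simp
  finally have rs: "r < sqrt (real n) + 1" unfolding r_def .
  have "(2*r - 2) * x < 2 * sqrt (real n) * x" using xp rs by (intro mult_strict_right_mono) auto
  with h1 have "r*r + x*x - 3*x < 2 * sqrt (real n) * x" by linarith
  hence "(r*r + x*x - 3*x) / x < 2 * sqrt (real n)" using xp by (simp add: divide_less_eq)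
  thus ?thesis using e by simp
qed

theorem mainTheorem6:
  fixes n k :: nat
  assumes "1 \<le> n" and "1 \<le> k" and "k \<le> n"
  shows "red_total n (moving_window n k) \<le> (real n - real k + 1) / (real k + 1) + (real k - 1)
         \<and> (k = nat \<lfloor>sqrt (real n + 2)\<rfloor> \<longrightarrow> red_total n (moving_window n k) < 2 * sqrt (real n))"
proof -
  define p where "p = n - k + 1"
  define t where "t = moving_window n k"
  have tdef: "t = run_ops (init_state n) (concat (map (\<lambda>i. map (\<lambda>j. (Red i, Blue j)) [i..<i+k]) [1..<p+1]))"
    unfolding t_def moving_window_def moving_window_ops_def p_def using assms(3)
    by (simp add: Suc_diff_le)
  have O: "(\<forall>i. 1 \<le> i \<and> i \<le> p \<longrightarrow> t (Red i) \<le> 1 / (real k + 1))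
    \<and> (\<forall>i. p < i \<longrightarrow> t (Red i) = init_state n (Red i))"
    using outer[OF assms(2), where n=n and q=p] unfolding tdef by blast
  define f where "f i = (if i \<le> p then 1 / (real k + 1) else 1)" for i
  have "red_total n t \<le> (\<Sum>i=1..n. f i)"
    unfolding red_total_def
  proof (rule sum_mono)
    fix i assume i: "i \<in> {1..n}"
    show "t (Red i) \<le> f i"
    proof (cases "i \<le> p")
      case True then show ?thesis using O i by (simp add: f_def)
    next
      case False then show ?thesis using O i by (simp add: f_def init_state_def)
    qed
  qed
  also have "(\<Sum>i=1..n. f i) = (\<Sum>i\<in>{1..p}. f i) + (\<Sum>i\<in>{p+1..n}. f i)"
  proof -
    have "{1..n} = {1..p} \<union> {p+1..n}" using assms unfolding p_def by auto
    then show ?thesis by (simp add: sum.union_disjoint)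
  qed
  also have "(\<Sum>i\<in>{1..p}. f i) = real p / (real k + 1)"
    by (simp add: f_def)
  also have "(\<Sum>i\<in>{p+1..n}. f i) = real k - 1"
  proof -
    have "(\<Sum>i\<in>{p+1..n}. f i) = (\<Sum>i\<in>{p+1..n}. 1)" by (rule sum.cong) (auto simp: f_def)
    also have "\<dots> = real (n - p)" by simp
    also have "\<dots> = real k - 1" using assms unfolding p_def by simp
    finally show ?thesis .
  qed
  also have "real p / (real k + 1) = (real n - real k + 1) / (real k + 1)"
    using assms unfolding p_def by simp
  finally have P1: "red_total n t \<le> (real n - real k + 1) / (real k + 1) + (real k - 1)" .
  have P2: "k = nat \<lfloor>sqrt (real n + 2)\<rfloor> \<longrightarrow> red_total n t < 2 * sqrt (real n)"
  proof
    assume "k = nat \<lfloor>sqrt (real n + 2)\<rfloor>"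
    from part2[OF assms(1) this] P1 show "red_total n t < 2 * sqrt (real n)" by linarith
  qed
  show ?thesis using P1 P2 unfolding t_def by blast
qed

end
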